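(* Let $T>0$, $\alpha>0$, $\beta>0$, $\sigma>0$, $u_1>0$, let $N$ be a positive integer, and consider the optimal control problem $$\int_0^T\big(\alpha R(t)+\beta u(t)\big)\,dt\to\inf,\qquad \dot R=-uR+N\sigma^2,\qquad R(0)=R_0,\qquad 0\le u(t)\le u_1,$$ with Pontryagin Hamiltonian $H(R,\psi,u)=-(\alpha R+\beta u)+\psi(-uR+N\sigma^2)=H_0(R,\psi)+uH_1(R,\psi)$, where $H_0=-\alpha R+N\sigma^2\psi$ and $H_1=-\beta-R\psi$, and Hamiltonian system $\dot\psi=\alpha+u\psi$, $\dot R=-uR+N\sigma^2$. Suppose $\sqrt{\alpha N\sigma^2/\beta}\le u_1$. Then $$\hat R_s(t)\equiv\sqrt{N\sigma^2\beta/\alpha},\qquad \psi_s(t)\equiv-\sqrt{\alpha\beta/(N\sigma^2)}$$ is a singular extremal of order $1$, and the corresponding singular control is $u_s=\sqrt{\alpha N\sigma^2/\beta}$.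
   Context: An extremal is a solution $(R(t),\psi(t))$ of the Hamiltonian system with $u=u(t)\in[0,u_1]$ satisfying the maximum condition $H(R(t),\psi(t),u(t))=\max_{0\le v\le u_1}H(R(t),\psi(t),v)$. An extremal on an interval $(t_1,t_2)$ is singular if the switching function vanishes identically there: $H_1(R(t),\psi(t))=0$ for all $t\in(t_1,t_2)$. A singular extremal has order $q$ if $\frac{\partial}{\partial u}\frac{d^k}{dt^k}H_1(R,\psi)=0$ for $k=0,\dots,2q-1$ and $\frac{\partial}{\partial u}\frac{d^{2q}}{dt^{2q}}H_1(R,\psi)\ne0$ in a neighbourhood of the trajectory, where time derivatives are computed along the Hamiltonian system. *)

theory Defs
  imports "HOL-Analysis.Analysis"
begin

text \<open>A "control jet" us :: nat => real stands for
  (u, u', u'', ...), i.e. us 0 = u, us (j+1) = j+1-st time derivative of u.\<close>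

definition Ham :: "real \<Rightarrow> real \<Rightarrow> real \<Rightarrow> nat \<Rightarrow> real \<Rightarrow> real \<Rightarrow> real \<Rightarrow> real" where
  "Ham \<alpha> \<beta> \<sigma> N R \<psi> u = - (\<alpha> * R + \<beta> * u) + \<psi> * (- u * R + real N * \<sigma>\<^sup>2)"

definition H0 :: "real \<Rightarrow> real \<Rightarrow> nat \<Rightarrow> real \<Rightarrow> real \<Rightarrow> real" where
  "H0 \<alpha> \<sigma> N R \<psi> = - \<alpha> * R + real N * \<sigma>\<^sup>2 * \<psi>"

definition H1 :: "real \<Rightarrow> real \<Rightarrow> real \<Rightarrow> real" where
  "H1 \<beta> R \<psi> = - \<beta> - R * \<psi>"

definition ham_sol :: "real \<Rightarrow> real \<Rightarrow> nat \<Rightarrow> real set \<Rightarrow> (real \<Rightarrow> real) \<Rightarrow> (real \<Rightarrow> real) \<Rightarrow> (real \<Rightarrow> real) \<Rightarrow> bool" where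
  "ham_sol \<alpha> \<sigma> N I R \<psi> u \<longleftrightarrow>
     (\<forall>t\<in>I. (R has_real_derivative (- u t * R t + real N * \<sigma>\<^sup>2)) (at t) \<and>
            (\<psi> has_real_derivative (\<alpha> + u t * \<psi> t)) (at t))"

definition extremal :: "real \<Rightarrow> real \<Rightarrow> real \<Rightarrow> nat \<Rightarrow> real \<Rightarrow> real set \<Rightarrow> (real \<Rightarrow> real) \<Rightarrow> (real \<Rightarrow> real) \<Rightarrow> (real \<Rightarrow> real) \<Rightarrow> bool" where
  "extremal \<alpha> \<beta> \<sigma> N u1 I R \<psi> u \<longleftrightarrow>
     ham_sol \<alpha> \<sigma> N I R \<psi> u \<and>
     (\<forall>t\<in>I. u t \<in> {0..u1} \<and>
        Ham \<alpha> \<beta> \<sigma> N (R t) (\<psi> t) (u t) = (MAX v\<in>{0..u1}. Ham \<alpha> \<beta> \<sigma> N (R t) (\<psi> t) v))"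

definition singular_extremal :: "real \<Rightarrow> real \<Rightarrow> real \<Rightarrow> nat \<Rightarrow> real \<Rightarrow> real set \<Rightarrow> (real \<Rightarrow> real) \<Rightarrow> (real \<Rightarrow> real) \<Rightarrow> (real \<Rightarrow> real) \<Rightarrow> bool" where
  "singular_extremal \<alpha> \<beta> \<sigma> N u1 I R \<psi> u \<longleftrightarrow>
     extremal \<alpha> \<beta> \<sigma> N u1 I R \<psi> u \<and> (\<forall>t\<in>I. H1 \<beta> (R t) (\<psi> t) = 0)"

text \<open>The k-th derivative of a function of (R, psi) only
  depends on the jet entries us 0, ..., us (k-1), hence the finite sum.\<close>
fun tder :: "real \<Rightarrow> real \<Rightarrow> nat \<Rightarrow> nat \<Rightarrow> (real \<times> real \<times> (nat \<Rightarrow> real) \<Rightarrow> real)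
             \<Rightarrow> (real \<times> real \<times> (nat \<Rightarrow> real) \<Rightarrow> real)" where
  "tder \<alpha> \<sigma> N 0 F = F"
| "tder \<alpha> \<sigma> N (Suc k) F = (\<lambda>(R, \<psi>, us).
      deriv (\<lambda>r. tder \<alpha> \<sigma> N k F (r, \<psi>, us)) R * (- us 0 * R + real N * \<sigma>\<^sup>2)
    + deriv (\<lambda>p. tder \<alpha> \<sigma> N k F (R, p, us)) \<psi> * (\<alpha> + us 0 * \<psi>)
    + (\<Sum>j<k. deriv (\<lambda>x. tder \<alpha> \<sigma> N k F (R, \<psi>, us(j := x))) (us j) * us (Suc j)))"

definition dudH1 :: "real \<Rightarrow> real \<Rightarrow> real \<Rightarrow> nat \<Rightarrow> nat \<Rightarrow> real \<Rightarrow> real \<Rightarrow> (nat \<Rightarrow> real) \<Rightarrow> real" where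
  "dudH1 \<alpha> \<beta> \<sigma> N k R \<psi> us =
     deriv (\<lambda>x. tder \<alpha> \<sigma> N k (\<lambda>(r, p, _). H1 \<beta> r p) (R, \<psi>, us(0 := x))) (us 0)"

definition singular_extremal_order :: "real \<Rightarrow> real \<Rightarrow> real \<Rightarrow> nat \<Rightarrow> real \<Rightarrow> real set \<Rightarrow> (real \<Rightarrow> real) \<Rightarrow> (real \<Rightarrow> real) \<Rightarrow> (real \<Rightarrow> real) \<Rightarrow> nat \<Rightarrow> bool" where
  "singular_extremal_order \<alpha> \<beta> \<sigma> N u1 I R \<psi> u q \<longleftrightarrow>
     singular_extremal \<alpha> \<beta> \<sigma> N u1 I R \<psi> u \<and>
     (\<exists>U::(real \<times> real) set. open U \<and> (\<forall>t\<in>I. (R t, \<psi> t) \<in> U) \<and>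
        (\<forall>(r, p)\<in>U. \<forall>us.
           (\<forall>k<2*q. dudH1 \<alpha> \<beta> \<sigma> N k r p us = 0) \<and> dudH1 \<alpha> \<beta> \<sigma> N (2*q) r p us \<noteq> 0))"

end

theory Submission
  imports Defs
begin

lemma deriv_lin: "deriv (\<lambda>x. a * x + b) y = (a::real)"
  by (rule DERIV_imp_deriv) (auto intro!: derivative_eq_intros)

lemma deriv_cst: "deriv (\<lambda>x. b) y = (0::real)"
  by (rule DERIV_imp_deriv) (auto intro!: derivative_eq_intros)

lemma deriv_l2: "deriv (\<lambda>x. - (x * a) - b) y = - (a::real)"
  by (rule DERIV_imp_deriv) (auto intro!: derivative_eq_intros)

lemma deriv_l3: "deriv (\<lambda>x. - b - x * a) y = - (a::real)"
  by (rule DERIV_imp_deriv) (auto intro!: derivative_eq_intros)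

lemma tder1: "tder \<alpha> \<sigma> N 1 (\<lambda>(r, p, _). H1 \<beta> r p) =
   (\<lambda>(r, p, us). (-\<alpha>) * r + (- p * (real N * \<sigma>\<^sup>2)))"
proof -
  have a: "\<And>R \<psi>. deriv (\<lambda>r. - \<beta> - r * \<psi>) R = - \<psi>"
    using deriv_lin[of "-\<psi>" "-\<beta>"] by (simp add: algebra_simps)
  have b: "\<And>R \<psi>. deriv (\<lambda>p. - \<beta> - R * p) \<psi> = - R"
    using deriv_lin[of "-R" "-\<beta>"] by (simp add: algebra_simps)
  show ?thesis
    by (auto simp: H1_def a b fun_eq_iff algebra_simps)
qed

lemma tder2: "tder \<alpha> \<sigma> N 2 (\<lambda>(r, p, _). H1 \<beta> r p) =
   (\<lambda>(r, p, us). (\<alpha> * r - real N * \<sigma>\<^sup>2 * p) * us 0 + (- 2 * \<alpha> * (real N * \<sigma>\<^sup>2)))"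
proof -
  have e: "tder \<alpha> \<sigma> N 2 F = tder \<alpha> \<sigma> N (Suc 1) F" for F by (simp add: numeral_2_eq_2 del: tder.simps)
  have a: "\<And>R \<psi>. deriv (\<lambda>r. (-\<alpha>) * r + (- \<psi> * (real N * \<sigma>\<^sup>2))) R = - \<alpha>"
    by (rule deriv_lin)
  have b: "\<And>R \<psi>. deriv (\<lambda>p. (-\<alpha>) * R + (- p * (real N * \<sigma>\<^sup>2))) \<psi> = - (real N * \<sigma>\<^sup>2)"
    using deriv_lin[of "- (real N * \<sigma>\<^sup>2)"] by (simp add: algebra_simps)
  show ?thesis
    unfolding e tder.simps(2) tder1
    by (auto simp: deriv_l2 deriv_l3 deriv_cst fun_eq_iff algebra_simps)
qed

theorem lemma2:
  fixes T \<alpha> \<beta> \<sigma> u1 :: real and N :: nat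
  assumes "T > 0" "\<alpha> > 0" "\<beta> > 0" "\<sigma> > 0" "u1 > 0" "N > 0"
    and "sqrt (\<alpha> * real N * \<sigma>\<^sup>2 / \<beta>) \<le> u1"
  shows "singular_extremal_order \<alpha> \<beta> \<sigma> N u1 {0<..<T}
           (\<lambda>t. sqrt (real N * \<sigma>\<^sup>2 * \<beta> / \<alpha>)) (\<lambda>t. - sqrt (\<alpha> * \<beta> / (real N * \<sigma>\<^sup>2)))
           (\<lambda>t. sqrt (\<alpha> * real N * \<sigma>\<^sup>2 / \<beta>)) 1
       \<and> (\<forall>u. ham_sol \<alpha> \<sigma> N {0<..<T}
               (\<lambda>t. sqrt (real N * \<sigma>\<^sup>2 * \<beta> / \<alpha>)) (\<lambda>t. - sqrt (\<alpha> * \<beta> / (real N * \<sigma>\<^sup>2))) u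
            \<longrightarrow> (\<forall>t\<in>{0<..<T}. u t = sqrt (\<alpha> * real N * \<sigma>\<^sup>2 / \<beta>)))"
proof -
  define c where "c = real N * \<sigma>\<^sup>2"
  have c: "c > 0" using assms unfolding c_def by simp
  define R where "R = sqrt (c * \<beta> / \<alpha>)"
  define P where "P = - sqrt (\<alpha> * \<beta> / c)"
  define U where "U = sqrt (\<alpha> * c / \<beta>)"
  have R0: "R > 0" using assms c unfolding R_def by simp
  have P0: "P < 0" using assms c unfolding P_def by simp
  have U0: "U > 0" using assms c unfolding U_def by simp
  have RP: "R * P = - \<beta>"
  proof -
    have "R * P = - sqrt ((c * \<beta> / \<alpha>) * (\<alpha> * \<beta> / c))"
      unfolding R_def P_def by (simp only: real_sqrt_mult mult_minus_right)
    also have "(c * \<beta> / \<alpha>) * (\<alpha> * \<beta> / c) = \<beta>\<^sup>2" using assms c by (simp add: field_simps power2_eq_square)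
    finally show ?thesis using assms by simp
  qed
  have UR: "U * R = c"
  proof -
    have "U * R = sqrt ((\<alpha> * c / \<beta>) * (c * \<beta> / \<alpha>))"
      unfolding R_def U_def by (simp only: real_sqrt_mult)
    also have "(\<alpha> * c / \<beta>) * (c * \<beta> / \<alpha>) = c\<^sup>2" using assms c by (simp add: field_simps power2_eq_square)
    finally show ?thesis using c by simp
  qed
  have UP: "U * P = - \<alpha>"
  proof -
    have "U * P = - sqrt ((\<alpha> * c / \<beta>) * (\<alpha> * \<beta> / c))"
      unfolding P_def U_def by (simp only: real_sqrt_mult mult_minus_right)
    also have "(\<alpha> * c / \<beta>) * (\<alpha> * \<beta> / c) = \<alpha>\<^sup>2" using assms c by (simp add: field_simps power2_eq_square)
    finally show ?thesis using assms by simp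
  qed
  have eqs: "sqrt (real N * \<sigma>\<^sup>2 * \<beta> / \<alpha>) = R" "- sqrt (\<alpha> * \<beta> / (real N * \<sigma>\<^sup>2)) = P"
     "sqrt (\<alpha> * real N * \<sigma>\<^sup>2 / \<beta>) = U"
    unfolding R_def P_def U_def c_def by (simp_all add: mult.assoc)
  have hs: "ham_sol \<alpha> \<sigma> N {0<..<T} (\<lambda>t. R) (\<lambda>t. P) (\<lambda>t. U)"
    unfolding ham_sol_def
  proof (intro ballI conjI)
    fix t
    have "- U * R + real N * \<sigma>\<^sup>2 = 0" using UR c_def by simp
    then show "((\<lambda>t. R) has_real_derivative - U * R + real N * \<sigma>\<^sup>2) (at t)"
      by (simp add: DERIV_const)
    have "\<alpha> + U * P = 0" using UP by simp
    then show "((\<lambda>t. P) has_real_derivative \<alpha> + U * P) (at t)"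
      by (simp add: DERIV_const)
  qed
  have hamc: "Ham \<alpha> \<beta> \<sigma> N R P v = - \<alpha> * R + P * c" for v
  proof -
    have "Ham \<alpha> \<beta> \<sigma> N R P v = - \<alpha> * R + P * c - v * (\<beta> + R * P)"
      unfolding Ham_def c_def by (simp add: algebra_simps)
    then show ?thesis using RP by simp
  qed
  have img: "(\<lambda>v. Ham \<alpha> \<beta> \<sigma> N R P v) ` {0..u1} = {- \<alpha> * R + P * c}"
    using assms(5) by (simp add: hamc image_constant_conv)
  have ext: "extremal \<alpha> \<beta> \<sigma> N u1 {0<..<T} (\<lambda>t. R) (\<lambda>t. P) (\<lambda>t. U)"
    unfolding extremal_def using hs U0 assms(7) eqs img hamc by auto
  have sing: "singular_extremal \<alpha> \<beta> \<sigma> N u1 {0<..<T} (\<lambda>t. R) (\<lambda>t. P) (\<lambda>t. U)"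
    unfolding singular_extremal_def using ext RP by (simp add: H1_def)
  define Uo where "Uo = {(r, p). 0 < \<alpha> * r - c * p}"
  have oU: "open Uo"
  proof -
    have "Uo = {x. 0 < \<alpha> * fst x - c * snd x}" unfolding Uo_def by auto
    moreover have "open {x::real\<times>real. 0 < \<alpha> * fst x - c * snd x}"
      by (intro open_Collect_less continuous_intros)
    ultimately show ?thesis by simp
  qed
  have inU: "(R, P) \<in> Uo"
  proof -
    have "0 < \<alpha> * R" using assms(2) R0 by simp
    moreover have "c * P < 0" using c P0 by (simp add: mult_pos_neg)
    ultimately show ?thesis unfolding Uo_def by simp
  qed
  have d0: "dudH1 \<alpha> \<beta> \<sigma> N 0 r p us = 0" for r p us
    unfolding dudH1_def by (simp add: deriv_cst)
  have d1: "dudH1 \<alpha> \<beta> \<sigma> N 1 r p us = 0" for r p us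
    unfolding dudH1_def tder1 by (simp add: deriv_cst)
  have d2: "dudH1 \<alpha> \<beta> \<sigma> N 2 r p us = \<alpha> * r - c * p" for r p us
    unfolding dudH1_def tder2 c_def by (simp add: deriv_lin)
  have ord: "singular_extremal_order \<alpha> \<beta> \<sigma> N u1 {0<..<T} (\<lambda>t. R) (\<lambda>t. P) (\<lambda>t. U) 1"
    unfolding singular_extremal_order_def
  proof (intro conjI sing exI[of _ Uo])
    show "open Uo" by (rule oU)
    show "\<forall>t\<in>{0<..<T}. (R, P) \<in> Uo" using inU by simp
    show "\<forall>(r, p)\<in>Uo. \<forall>us. (\<forall>k<2 * 1. dudH1 \<alpha> \<beta> \<sigma> N k r p us = 0) \<and>
          dudH1 \<alpha> \<beta> \<sigma> N (2 * 1) r p us \<noteq> 0"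
    proof (clarify)
      fix r p us assume "(r, p) \<in> Uo"
      hence "\<alpha> * r - c * p \<noteq> 0" unfolding Uo_def by simp
      moreover have "\<forall>k<2. dudH1 \<alpha> \<beta> \<sigma> N k r p us = 0"
        using d0 d1 by (auto simp: less_2_cases_iff)
      ultimately show "(\<forall>k<2 * 1. dudH1 \<alpha> \<beta> \<sigma> N k r p us = 0) \<and>
          dudH1 \<alpha> \<beta> \<sigma> N (2 * 1) r p us \<noteq> 0" using d2 by simp
    qed
  qed
  have uniq: "\<forall>u. ham_sol \<alpha> \<sigma> N {0<..<T} (\<lambda>t. R) (\<lambda>t. P) u \<longrightarrow> (\<forall>t\<in>{0<..<T}. u t = U)"
  proof (intro allI impI ballI)
    fix u t assume h: "ham_sol \<alpha> \<sigma> N {0<..<T} (\<lambda>t. R) (\<lambda>t. P) u" and t: "t \<in> {0<..<T}"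
    then have "((\<lambda>t. R) has_real_derivative - u t * R + c) (at t)"
      unfolding ham_sol_def c_def by auto
    moreover have "((\<lambda>t. R) has_real_derivative 0) (at t)" by (rule DERIV_const)
    ultimately have "- u t * R + c = 0" by (rule DERIV_unique)
    hence "u t * R = U * R" using UR by linarith
    thus "u t = U" using R0 by (metis mult_right_cancel less_irrefl)
  qed
  show ?thesis unfolding eqs using ord uniq by simp
qed

end
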